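(* Let $d\ge3$ and $\gamma\in\mathcal{P}_{\mathcal{W}_d}$. Then there exist a sequence $(\gamma_n^1)$ of discrete measures in $\mathcal{P}_{\mathcal{W}_d}$, a sequence $(\gamma_n^2)$ of singular measures without point masses in $\mathcal{P}_{\mathcal{W}_d}$, and a sequence $(\gamma_n^3)$ of absolutely continuous measures in $\mathcal{P}_{\mathcal{W}_d}$, each of which converges weakly to $\gamma$ on $[0,\infty)$.
   Context: $\mathcal{P}_{\mathcal{W}_d}$ is the set of probability measures $\gamma$ on $\mathcal{B}([0,\infty))$ with $\gamma(\{0\})=0$ and $\int_{[0,1]}(1-t)^{d-1}\,d\gamma(t)=1/2$. Singular and absolutely continuous are with respect to Lebesgue measure. *)

theory Defs
  imports "HOL-Probability.Probability"
begin

text \<open>Probability measures on the Borel sets of [0,oo), represented as Borel probability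
  measures on the real line carried by [0,oo).\<close>
definition prob_on_halfline :: "real measure \<Rightarrow> bool" where
  "prob_on_halfline M \<longleftrightarrow> prob_space M \<and> sets M = sets borel \<and> emeasure M {..<0} = 0"

definition PW :: "nat \<Rightarrow> real measure set" where
  "PW d = {M. prob_on_halfline M \<and> emeasure M {0} = 0 \<and>
              (LINT t:{0..1}|M. (1 - t) ^ (d - 1)) = 1 / 2}"

definition weak_conv_halfline :: "(nat \<Rightarrow> real measure) \<Rightarrow> real measure \<Rightarrow> bool" where
  "weak_conv_halfline Ms M \<longleftrightarrow>
     (\<forall>f :: real \<Rightarrow> real. continuous_on {0..} f \<and> bounded (f ` {0..}) \<longrightarrow>
        (\<lambda>n. integral\<^sup>L (Ms n) f) \<longlonglongrightarrow> integral\<^sup>L M f)"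

definition discrete_measure :: "real measure \<Rightarrow> bool" where
  "discrete_measure M \<longleftrightarrow> (\<exists>A. countable A \<and> A \<in> sets M \<and> emeasure M (space M - A) = 0)"

definition singular_measure :: "real measure \<Rightarrow> bool" where
  "singular_measure M \<longleftrightarrow> (\<exists>N \<in> sets borel. emeasure lborel N = 0 \<and> emeasure M (space M - N) = 0)"

definition no_atoms :: "real measure \<Rightarrow> bool" where
  "no_atoms M \<longleftrightarrow> (\<forall>x. emeasure M {x} = 0)"

definition abs_cont_measure :: "real measure \<Rightarrow> bool" where
  "abs_cont_measure M \<longleftrightarrow> absolutely_continuous lborel M"

end

theory Submission
  imports Defs
begin



definition cdig :: "nat \<Rightarrow> real \<Rightarrow> real" where
  "cdig i x = real_of_int (\<lfloor>2^(i+1)*x\<rfloor> - 2*\<lfloor>2^i*x\<rfloor>)"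

definition cterm :: "real \<Rightarrow> nat \<Rightarrow> real" where
  "cterm x i = 2 * cdig i x / 3^(i+1)"

definition cantorf :: "real \<Rightarrow> real" where
  "cantorf x = suminf (cterm x)"

lemma floor_double: "\<lfloor>2*z\<rfloor> - 2*\<lfloor>z\<rfloor> = 0 \<or> \<lfloor>2*z\<rfloor> - 2*\<lfloor>z\<rfloor> = (1::int)" for z :: real
proof -
  have a: "real_of_int \<lfloor>z\<rfloor> \<le> z" "z < real_of_int \<lfloor>z\<rfloor> + 1" by linarith+
  have "2*\<lfloor>z\<rfloor> \<le> \<lfloor>2*z\<rfloor>" unfolding le_floor_iff using a by simp
  moreover have "\<lfloor>2*z\<rfloor> < 2*\<lfloor>z\<rfloor> + 2" unfolding floor_less_iff using a by linarith
  ultimately show ?thesis by linarith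
qed

lemma cdig_01: "cdig i x = 0 \<or> cdig i x = 1"
proof -
  have e: "cdig i x = of_int (\<lfloor>2*(2^i*x)\<rfloor> - 2*\<lfloor>2^i*x\<rfloor>)" unfolding cdig_def by (simp add: mult.assoc)
  show ?thesis
  proof (cases "\<lfloor>2*(2^i*x)\<rfloor> - 2*\<lfloor>2^i*x\<rfloor> = 0")
    case True then show ?thesis by (simp only: e) simp
  next
    case False then have "\<lfloor>2*(2^i*x)\<rfloor> - 2*\<lfloor>2^i*x\<rfloor> = 1" using floor_double[of "2^i*x"] by blast
    then show ?thesis by (simp only: e) simp
  qed
qed

lemma cdig_Suc: "cdig (Suc i) x = cdig i (2*x)"
  unfolding cdig_def by (simp add: mult.assoc mult.left_commute)

lemma cterm_bounds: "0 \<le> cterm x i" "cterm x i \<le> 2 / 3^(i+1)"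
proof -
  have "0 \<le> cdig i x" "cdig i x \<le> 1" using cdig_01[of i x] by auto
  then show "0 \<le> cterm x i" "cterm x i \<le> 2 / 3^(i+1)"
    unfolding cterm_def by (simp_all add: divide_right_mono)
qed

lemma geo: "(\<lambda>i. 2 / (3::real)^(i+1)) sums 1"
proof -
  have "(\<lambda>i. (1/3::real)^i) sums (1/(1-1/3))" by (rule geometric_sums) simp
  then have "(\<lambda>i. (2/3) * (1/3::real)^i) sums ((2/3)*(1/(1-1/3)))" by (rule sums_mult)
  moreover have "(\<lambda>i. (2/3) * (1/3::real)^i) = (\<lambda>i. 2 / (3::real)^(i+1))"
    by (rule ext) (simp add: power_one_over)
  ultimately show ?thesis by simp
qed

lemma summable_cterm: "summable (cterm x)"
proof (rule summable_comparison_test')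
  show "summable (\<lambda>i. 2 / (3::real)^(i+1))" using geo by (simp add: sums_iff)
  show "norm (cterm x n) \<le> 2 / 3^(n+1)" for n using cterm_bounds[of x n] by simp
qed

lemma cantorf_bounds: "0 \<le> cantorf x" "cantorf x \<le> 1"
proof -
  show "0 \<le> cantorf x" unfolding cantorf_def
    by (rule suminf_nonneg[OF summable_cterm]) (simp add: cterm_bounds)
  have "cantorf x \<le> (\<Sum>i. 2 / (3::real)^(i+1))" unfolding cantorf_def
  proof (rule suminf_le)
    show "summable (\<lambda>i. 2 / (3::real)^(i+1))" using geo by (simp add: sums_iff)
  qed (use cterm_bounds summable_cterm in auto)
  then show "cantorf x \<le> 1" using geo by (simp add: sums_iff)
qed

lemma cantorf_eq: "cantorf x = 2 * cdig 0 x / 3 + cantorf (2*x) / 3"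
proof -
  have "cantorf x = (\<Sum>i. cterm x (Suc i)) + cterm x 0"
    unfolding cantorf_def using suminf_split_head[OF summable_cterm[of x]] by simp
  also have "(\<lambda>i. cterm x (Suc i)) = (\<lambda>i. cterm (2*x) i / 3)"
    by (auto simp: cterm_def cdig_Suc)
  also have "(\<Sum>i. cterm (2*x) i / 3) = cantorf (2*x) / 3"
    unfolding cantorf_def by (rule suminf_divide[OF summable_cterm])
  finally show ?thesis by (simp add: cterm_def)
qed

lemma cantorf_measurable[measurable]: "cantorf \<in> borel_measurable borel"
proof (rule borel_measurable_LIMSEQ_real)
  show "(\<lambda>n. sum (cterm x) {..<n}) \<longlonglongrightarrow> cantorf x" for x
    unfolding cantorf_def using summable_cterm summable_LIMSEQ by blast
  show "(\<lambda>x. sum (cterm x) {..<n}) \<in> borel_measurable borel" for n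
    unfolding cterm_def cdig_def by measurable
qed


lemma lborel_affine_vimage:
  fixes A :: "real set" assumes A[measurable]: "A \<in> sets borel" and c: "c \<noteq> 0"
  shows "emeasure lborel A = ennreal \<bar>c\<bar> * emeasure lborel ((\<lambda>x. t + c*x) -` A)"
proof -
  have "emeasure lborel A = (\<integral>\<^sup>+x. indicator A x \<partial>lborel)" using A by simp
  also have "\<dots> = \<bar>c\<bar> * (\<integral>\<^sup>+x. indicator A (t + c*x) \<partial>lborel)"
    by (rule nn_integral_real_affine) (use c in auto)
  also have "(\<integral>\<^sup>+x. indicator A (t + c*x) \<partial>lborel) = (\<integral>\<^sup>+x. indicator ((\<lambda>x. t + c*x) -` A) x \<partial>lborel)"
    by (rule nn_integral_cong) (simp add: indicator_def)
  also have "\<dots> = emeasure lborel ((\<lambda>x. t + c*x) -` A)"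
    by (rule nn_integral_indicator) (simp add: measurable_sets_borel[of _ borel])
  finally show ?thesis .
qed

lemma vimage_affine_borel[measurable]:
  fixes A :: "real set" assumes "A \<in> sets borel"
  shows "(\<lambda>x. t + c*x) -` A \<in> sets borel"
  by (rule measurable_sets_borel[OF _ assms]) simp

lemma lborel_affine_null:
  fixes A :: "real set" assumes A: "A \<in> sets borel" and c: "c \<noteq> 0" and N: "emeasure lborel A = 0"
  shows "emeasure lborel ((\<lambda>x. t + c*x) -` A) = 0"
  using lborel_affine_vimage[OF A c, of t] N c by (simp add: ennreal_eq_0_iff)

lemma measure_affine_vimage:
  fixes A :: "real set" assumes A: "A \<in> sets borel" and c: "c \<noteq> 0"
  shows "measure lborel A = \<bar>c\<bar> * measure lborel ((\<lambda>x. t + c*x) -` A)"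
  unfolding measure_def lborel_affine_vimage[OF A c, of t] by (simp add: enn2real_mult)

fun Kset :: "nat \<Rightarrow> real set" where
  "Kset 0 = {0..1}"
| "Kset (Suc k) = (\<lambda>y. 0 + 3*y) -` Kset k \<union> (\<lambda>y. -2 + 3*y) -` Kset k"

definition Kc :: "real set" where "Kc = (\<Inter>k. Kset k)"

lemma Kset_borel[measurable]: "Kset k \<in> sets borel"
proof (induction k)
  case 0 then show ?case by simp
next
  case (Suc k) show ?case unfolding Kset.simps by (intro sets.Un vimage_affine_borel Suc.IH)
qed

lemma Kset_sub: "Kset k \<subseteq> {0..1}"
  by (induction k) auto

lemma Kset_fin: "emeasure lborel (Kset k) \<noteq> \<infinity>"
proof -
  have "emeasure lborel (Kset k) \<le> emeasure lborel {0..1::real}"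
    by (rule emeasure_mono[OF Kset_sub]) simp
  then show ?thesis by (auto simp: top_unique)
qed

lemma vimage_fin:
  assumes "emeasure lborel (Kset k) \<noteq> \<infinity>"
  shows "emeasure lborel ((\<lambda>y. t + 3*y) -` Kset k) \<noteq> \<infinity>"
proof
  assume "emeasure lborel ((\<lambda>y. t + 3*y) -` Kset k) = \<infinity>"
  then have "ennreal \<bar>3\<bar> * emeasure lborel ((\<lambda>y. t + 3*y) -` Kset k) = \<infinity>"
    by (simp add: ennreal_mult_top)
  then show False using lborel_affine_vimage[OF Kset_borel[of k], of 3 t] assms by simp
qed

lemma Kset_measure: "measure lborel (Kset k) \<le> (2/3)^k"
proof (induction k)
  case 0 then show ?case by simp
next
  case (Suc k)
  let ?A = "(\<lambda>y. 0 + 3*y) -` Kset k" and ?B = "(\<lambda>y. -2 + 3*y) -` Kset k"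
  have fA: "emeasure lborel ?A \<noteq> \<infinity>" by (rule vimage_fin[OF Kset_fin])
  have fB: "emeasure lborel ?B \<noteq> \<infinity>" by (rule vimage_fin[OF Kset_fin])
  have "measure lborel (Kset (Suc k)) \<le> measure lborel ?A + measure lborel ?B"
    unfolding Kset.simps by (rule measure_subadditive[OF _ _ fA fB]) (unfold sets_lborel; rule vimage_affine_borel[OF Kset_borel])+
  also have "measure lborel ?A = measure lborel (Kset k) / 3"
    using measure_affine_vimage[OF Kset_borel[of k], of 3 0] by simp
  also have "measure lborel ?B = measure lborel (Kset k) / 3"
    using measure_affine_vimage[OF Kset_borel[of k], of 3 "-2"] by simp
  finally show ?case using Suc.IH by simp
qed



lemma Kc_borel[measurable]: "Kc \<in> sets borel"
  unfolding Kc_def by measurable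

lemma Kc_null: "emeasure lborel Kc = 0"
proof -
  have fin: "emeasure lborel Kc \<noteq> \<infinity>"
  proof -
    have sub: "Kc \<subseteq> Kset 0" unfolding Kc_def by blast
    have "emeasure lborel Kc \<le> emeasure lborel (Kset 0)"
      by (rule emeasure_mono[OF sub]) simp
    then show ?thesis using Kset_fin[of 0] by (auto simp: top_unique)
  qed
  have le: "measure lborel Kc \<le> (2/3)^k" for k
  proof -
    have f: "Kset k \<in> fmeasurable lborel"
      using Kset_fin[of k] by (auto simp: fmeasurable_def top.not_eq_extremum)
    have "Kc \<subseteq> Kset k" unfolding Kc_def by blast
    then have "measure lborel Kc \<le> measure lborel (Kset k)"
      by (rule measure_mono_fmeasurable[OF _ _ f]) simp
    then show ?thesis using Kset_measure[of k] by linarith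
  qed
  have "(\<lambda>k. (2/3::real)^k) \<longlonglongrightarrow> 0" by (rule LIMSEQ_power_zero) simp
  then have "measure lborel Kc \<le> 0"
    using le by (intro LIMSEQ_le_const) auto
  then have "measure lborel Kc = 0" using measure_nonneg[of lborel Kc] by linarith
  then show ?thesis using fin by (simp add: emeasure_eq_ennreal_measure)
qed


lemma cantorf_Kset: "cantorf x \<in> Kset k"
proof (induction k arbitrary: x)
  case 0 then show ?case using cantorf_bounds[of x] by simp
next
  case (Suc k)
  note e = cantorf_eq[of x]
  from cdig_01[of 0 x] show ?case
  proof
    assume "cdig 0 x = 0"
    then have "0 + 3 * cantorf x = cantorf (2*x)" using e by simp
    then show ?case using Suc.IH[of "2*x"] by simp
  next
    assume "cdig 0 x = 1"
    then have "-2 + 3 * cantorf x = cantorf (2*x)" using e by simp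
    then show ?case using Suc.IH[of "2*x"] by simp
  qed
qed

lemma cantorf_Kc: "cantorf x \<in> Kc"
  unfolding Kc_def using cantorf_Kset by auto


lemma cdig0_lo: assumes "cdig 0 x = 0" shows "cantorf x \<le> 1/3"
proof -
  have "cantorf x = cantorf (2*x) / 3" using cantorf_eq[of x] unfolding assms by simp
  then show ?thesis using cantorf_bounds(2)[of "2*x"] by linarith
qed

lemma cdig0_hi: assumes "cdig 0 x = 1" shows "cantorf x \<ge> 2/3"
proof -
  have "cantorf x = 2/3 + cantorf (2*x) / 3" using cantorf_eq[of x] unfolding assms by simp
  then show ?thesis using cantorf_bounds(1)[of "2*x"] by linarith
qed

lemma cdig0_det: assumes e: "cantorf x = cantorf y" shows "cdig 0 x = cdig 0 y"
proof (rule ccontr)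
  assume ne: "cdig 0 x \<noteq> cdig 0 y"
  show False
  proof (cases "cdig 0 x = 0")
    case True
    then have "cdig 0 y = 1" using ne cdig_01[of 0 y] by simp
    then show False using cdig0_lo[OF True] cdig0_hi[of y] e by linarith
  next
    case False
    then have x1: "cdig 0 x = 1" using cdig_01[of 0 x] by simp
    then have "cdig 0 y = 0" using ne cdig_01[of 0 y] by simp
    then show False using cdig0_lo[of y] cdig0_hi[OF x1] e by linarith
  qed
qed

lemma cantorf_cdig: "cantorf x = cantorf y \<Longrightarrow> cdig i x = cdig i y"
proof (induction i arbitrary: x y)
  case 0 then show ?case by (rule cdig0_det)
next
  case (Suc i)
  have ex: "cantorf x = 2 * cdig 0 x / 3 + cantorf (2*x) / 3" by (rule cantorf_eq)
  have ey: "cantorf y = 2 * cdig 0 y / 3 + cantorf (2*y) / 3" by (rule cantorf_eq)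
  have "cdig 0 x = cdig 0 y" using Suc.prems by (rule cdig0_det)
  then have "cantorf (2*x) = cantorf (2*y)" using ex ey Suc.prems by linarith
  then have "cdig i (2*x) = cdig i (2*y)" by (rule Suc.IH)
  then show ?case by (simp only: cdig_Suc)
qed

lemma floor_step: "real_of_int \<lfloor>2^(i+1)*x\<rfloor> = cdig i x + 2 * real_of_int \<lfloor>2^i*x\<rfloor>"
  unfolding cdig_def by simp

lemma cantorf_inj01:
  assumes x: "x \<in> {0..<1}" and y: "y \<in> {0..<1}" and e: "cantorf x = cantorf y"
  shows "x = y"
proof -
  have fl: "\<lfloor>(2::real)^i*x\<rfloor> = \<lfloor>2^i*y\<rfloor>" for i
  proof (induction i)
    case 0
    have "\<lfloor>x\<rfloor> = 0" "\<lfloor>y\<rfloor> = 0" using x y by (simp_all add: floor_eq_iff)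
    then show ?case by simp
  next
    case (Suc i)
    have "real_of_int \<lfloor>2^(i+1)*x\<rfloor> = real_of_int \<lfloor>2^(i+1)*y\<rfloor>"
      unfolding floor_step using Suc.IH cantorf_cdig[OF e, of i] by simp
    then show ?case by simp
  qed
  have close: "\<bar>x - y\<bar> < (1/2)^i" for i
  proof -
    have "real_of_int \<lfloor>(2::real)^i*x\<rfloor> \<le> 2^i*x" "2^i*x < real_of_int \<lfloor>(2::real)^i*x\<rfloor> + 1"
      "real_of_int \<lfloor>(2::real)^i*y\<rfloor> \<le> 2^i*y" "2^i*y < real_of_int \<lfloor>(2::real)^i*y\<rfloor> + 1" by linarith+
    moreover have "real_of_int \<lfloor>(2::real)^i*x\<rfloor> = real_of_int \<lfloor>(2::real)^i*y\<rfloor>" using fl[of i] by simp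
    ultimately have "\<bar>2^i*x - 2^i*y\<bar> < (1::real)" by linarith
    then have "2^i * \<bar>x - y\<bar> < (1::real)" by (simp add: abs_mult right_diff_distrib[symmetric])
    then show ?thesis by (simp add: power_one_over divide_simps mult.commute)
  qed
  show ?thesis
  proof (rule ccontr)
    assume "x \<noteq> y"
    then have "0 < \<bar>x - y\<bar>" by simp
    then obtain i where "(1/2::real)^i < \<bar>x - y\<bar>" using real_arch_pow_inv[of "\<bar>x - y\<bar>" "1/2"] by auto
    then show False using close[of i] by simp
  qed
qed



definition ghat :: "nat \<Rightarrow> real \<Rightarrow> real" where
  "ghat d y = (1 - min 1 (max 0 y)) ^ (d - 1)"

lemma ghat_bounds: "0 \<le> ghat d y" "ghat d y \<le> 1"
  unfolding ghat_def by (auto intro: power_le_one)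

lemma ghat_abs: "\<bar>ghat d y\<bar> \<le> 1"
  using ghat_bounds[of d y] by simp

lemma ghat_cont: "continuous_on UNIV (ghat d)"
  unfolding ghat_def by (intro continuous_intros)

lemma ghat_meas[measurable]: "ghat d \<in> borel_measurable borel"
  unfolding ghat_def by measurable

definition U01 :: "real measure" where
  "U01 = uniform_measure lborel {0..1}"

lemma U01_prob: "prob_space U01"
  unfolding U01_def by (rule prob_space_uniform_measure) auto

lemma sets_U01[measurable_cong]: "sets U01 = sets borel"
  unfolding U01_def uniform_measure_def by simp

lemma emeasure_U01: "A \<in> sets borel \<Longrightarrow> emeasure U01 A = emeasure lborel ({0..1} \<inter> A)"
  unfolding U01_def by (subst emeasure_uniform_measure) (auto simp: divide_ennreal_def)

lemma measure_U01_less: assumes "0 \<le> e" "e \<le> 1" shows "measure U01 {..<e} = e"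
proof -
  have "{0..1} \<inter> {..<e} = {0..<e}" using assms by auto
  then have "emeasure U01 {..<e} = ennreal e" using assms by (simp add: emeasure_U01)
  then show ?thesis using assms by (simp add: measure_def)
qed

lemma space_U01_g: "space U01 = UNIV" using sets_eq_imp_space_eq[OF sets_U01] by simp

lemma halfline_AE:
  assumes "prob_on_halfline M" shows "AE x in M. 0 \<le> x"
proof (rule AE_I')
  show "{..<0} \<in> null_sets M" using assms unfolding prob_on_halfline_def by auto
  show "{x \<in> space M. \<not> 0 \<le> x} \<subseteq> {..<0}" by auto
qed

lemma meas_of_borel:
  assumes "sets M = sets borel" "f \<in> borel_measurable borel" shows "f \<in> borel_measurable M"
  using assms measurable_cong_sets[OF assms(1) refl] by simp

lemma bdd_integrable:
  fixes f :: "'a \<Rightarrow> real"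
  assumes "prob_space M" "f \<in> borel_measurable M" "\<And>x. \<bar>f x\<bar> \<le> B"
  shows "integrable M f"
  using assms by (intro finite_measure.integrable_const_bound[where B=B]) (auto simp: prob_space_def)

lemma bdd_integral:
  fixes f :: "'a \<Rightarrow> real"
  assumes P: "prob_space M" and [measurable]: "f \<in> borel_measurable M" and B: "\<And>x. \<bar>f x\<bar> \<le> B"
  shows "\<bar>integral\<^sup>L M f\<bar> \<le> B"
proof -
  interpret prob_space M by (rule P)
  have i: "integrable M f" by (rule bdd_integrable[OF P _ B]) simp
  have "\<bar>integral\<^sup>L M f\<bar> \<le> (\<integral>x. \<bar>f x\<bar> \<partial>M)" using integral_abs_bound .
  also have "\<dots> \<le> (\<integral>x. B \<partial>M)"
    by (rule integral_mono) (use i B in auto)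
  also have "\<dots> = B" by (simp add: prob_space)
  finally show ?thesis .
qed

lemma lint_ghat:
  assumes M: "prob_on_halfline M" and d: "d \<ge> 2"
  shows "(LINT t:{0..1}|M. (1 - t) ^ (d - 1)) = (\<integral>t. ghat d t \<partial>M)"
proof -
  have sM: "sets M = sets borel" using M unfolding prob_on_halfline_def by auto
  have "(\<integral>t. ghat d t \<partial>M) = (\<integral>t. indicator {0..1} t *\<^sub>R (1 - t) ^ (d - 1) \<partial>M)"
  proof (rule integral_cong_AE)
    show "ghat d \<in> borel_measurable M" by (rule meas_of_borel[OF sM]) simp
    show "(\<lambda>t. indicator {0..1} t *\<^sub>R (1 - t) ^ (d - 1)) \<in> borel_measurable M"
      by (rule meas_of_borel[OF sM]) simp
    show "AE t in M. ghat d t = indicator {0..1} t *\<^sub>R (1 - t) ^ (d - 1)"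
      using halfline_AE[OF M]
    proof eventually_elim
      case (elim t)
      show ?case
      proof (cases "t \<le> 1")
        case True then show ?thesis using elim by (simp add: ghat_def indicator_def)
      next
        case False
        have "d - 1 \<noteq> 0" using d by simp
        then show ?thesis using False elim by (simp add: ghat_def indicator_def)
      qed
    qed
  qed
  then show ?thesis by (simp add: set_lebesgue_integral_def)
qed

lemma nonmeas_integral:
  fixes f :: "real \<Rightarrow> real"
  assumes "sets M = sets borel" "f \<notin> borel_measurable borel"
  shows "integral\<^sup>L M f = 0"
proof -
  have "(borel_measurable M :: (real \<Rightarrow> real) set) = borel_measurable borel" by (rule measurable_cong_sets[OF assms(1) refl])
  then have "f \<notin> borel_measurable M" using assms(2) by simp
  then have "\<not> integrable M f" by auto
  then show ?thesis by (rule not_integrable_integral_eq)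
qed

locale constr =
  fixes d :: nat and \<gamma> :: "real measure" and \<nu> :: "real measure"
  assumes d3: "d \<ge> 3" and \<gamma>PW: "\<gamma> \<in> PW d" and \<nu>prob: "prob_space \<nu>"
    and sets_\<nu>[measurable_cong]: "sets \<nu> = sets borel"
    and \<nu>01: "AE u in \<nu>. 0 \<le> u \<and> u \<le> 1"
begin

lemma \<gamma>half: "prob_on_halfline \<gamma>" using \<gamma>PW unfolding PW_def by auto
lemma \<gamma>prob: "prob_space \<gamma>" using \<gamma>half unfolding prob_on_halfline_def by auto
lemma sets_\<gamma>[measurable_cong]: "sets \<gamma> = sets borel" using \<gamma>half unfolding prob_on_halfline_def by auto
lemma \<gamma>0: "emeasure \<gamma> {0} = 0" using \<gamma>PW unfolding PW_def by auto
lemma \<gamma>int: "(LINT t:{0..1}|\<gamma>. (1 - t) ^ (d - 1)) = 1/2" using \<gamma>PW unfolding PW_def by auto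

lemma \<gamma>pos: "AE t in \<gamma>. 0 < t"
proof -
  have "AE t in \<gamma>. t \<noteq> 0"
    by (rule AE_I'[of "{0}"]) (use \<gamma>0 sets_\<gamma> in auto)
  then show ?thesis using halfline_AE[OF \<gamma>half] by eventually_elim auto
qed

lemma space_\<gamma>: "space \<gamma> = UNIV" using sets_eq_imp_space_eq[OF sets_\<gamma>] by simp
lemma space_\<nu>: "space \<nu> = UNIV" using sets_eq_imp_space_eq[OF sets_\<nu>] by simp
lemma space_U01: "space U01 = UNIV" using sets_eq_imp_space_eq[OF sets_U01] by simp

lemma ghat_int_\<gamma>: "(\<integral>t. ghat d t \<partial>\<gamma>) = 1/2"
proof -
  have "(\<integral>t. ghat d t \<partial>\<gamma>) = (\<integral>t. indicator {0..1} t *\<^sub>R (1 - t) ^ (d - 1) \<partial>\<gamma>)"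
  proof (rule integral_cong_AE)
    show "ghat d \<in> borel_measurable \<gamma>" by (rule meas_of_borel[OF sets_\<gamma>]) simp
    show "(\<lambda>t. indicator {0..1} t *\<^sub>R (1 - t) ^ (d - 1)) \<in> borel_measurable \<gamma>"
      by (rule meas_of_borel[OF sets_\<gamma>]) simp
    show "AE t in \<gamma>. ghat d t = indicator {0..1} t *\<^sub>R (1 - t) ^ (d - 1)"
      using halfline_AE[OF \<gamma>half]
    proof eventually_elim
      case (elim t)
      show ?case
      proof (cases "t \<le> 1")
        case True then show ?thesis using elim by (simp add: ghat_def indicator_def)
      next
        case False
        have "d - 1 \<noteq> 0" using d3 by simp
        then show ?thesis using False elim by (simp add: ghat_def indicator_def)
      qed
    qed
  qed
  also have "\<dots> = 1/2" using \<gamma>int by (simp add: set_lebesgue_integral_def)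
  finally show ?thesis .
qed


definition mm :: "nat \<Rightarrow> real" where "mm n = real (Suc n)"
definition qq :: "nat \<Rightarrow> real \<Rightarrow> real" where "qq n t = of_int \<lceil>mm n * t\<rceil> / mm n"
definition c0 :: real where "c0 = 1 / (4 * real d)"
definition cst :: real where "cst = (\<integral>u. ghat d (c0 + c0 * u) \<partial>\<nu>)"
definition aa :: "nat \<Rightarrow> real" where "aa n = (\<integral>t. (\<integral>u. ghat d (qq n t + u / mm n) \<partial>\<nu>) \<partial>\<gamma>)"
definition al :: "nat \<Rightarrow> real" where "al n = (if aa n \<ge> 1/2 then 2 else c0)"
definition be :: "nat \<Rightarrow> real" where "be n = (if aa n \<ge> 1/2 then 1 else c0)"
definition ep :: "nat \<Rightarrow> real" where
  "ep n = (if aa n \<ge> 1/2 then (aa n - 1/2) / aa n else (1/2 - aa n) / (cst - aa n))"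
definition Psi :: "nat \<Rightarrow> real \<times> real \<times> real \<Rightarrow> real" where
  "Psi n = (\<lambda>(t, v, u). if v < ep n then al n + be n * u else qq n t + u / mm n)"
definition MM :: "(real \<times> real \<times> real) measure" where "MM = \<gamma> \<Otimes>\<^sub>M (U01 \<Otimes>\<^sub>M \<nu>)"
definition mu :: "nat \<Rightarrow> real measure" where "mu n = distr MM borel (Psi n)"

lemma mm_pos: "0 < mm n" unfolding mm_def by simp

lemma qq_meas[measurable]: "qq n \<in> borel_measurable borel"
  unfolding qq_def by measurable

lemma Psi_meas[measurable]: "Psi n \<in> borel_measurable MM"
  unfolding Psi_def MM_def by measurable

lemma Psi_meas2[measurable]: "Psi n \<in> borel_measurable (\<gamma> \<Otimes>\<^sub>M (U01 \<Otimes>\<^sub>M \<nu>))"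
  unfolding Psi_def by measurable

lemma MM_prob: "prob_space MM"
  unfolding MM_def by (intro prob_space_pair \<gamma>prob U01_prob \<nu>prob)

lemma mu_prob: "prob_space (mu n)"
  unfolding mu_def by (rule prob_space.prob_space_distr[OF MM_prob]) simp

lemma sets_mu[measurable_cong]: "sets (mu n) = sets borel"
  unfolding mu_def by simp


lemma I2_meas[measurable]:
  fixes h :: "real \<Rightarrow> real"
  assumes [measurable]: "h \<in> borel_measurable borel"
  shows "(\<lambda>t. \<integral>u. h (qq n t + u / mm n) \<partial>\<nu>) \<in> borel_measurable \<gamma>"
proof -
  interpret \<nu>p: prob_space \<nu> by (rule \<nu>prob)
  show ?thesis
    by (rule \<nu>p.borel_measurable_lebesgue_integral) measurable
qed

lemma Psi_slice:
  fixes h :: "real \<Rightarrow> real"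
  assumes [measurable]: "h \<in> borel_measurable borel"
  shows "(\<lambda>w. h (Psi n (t, w))) \<in> borel_measurable (U01 \<Otimes>\<^sub>M \<nu>)"
proof -
  have eq: "(\<lambda>w. h (Psi n (t, w))) = (\<lambda>w. if fst w < ep n then h (al n + be n * snd w) else h (qq n t + snd w / mm n))"
    by (auto simp: Psi_def)
  show ?thesis unfolding eq by measurable
qed

lemma formula:
  assumes h[measurable]: "h \<in> borel_measurable borel" and hB: "\<And>x. \<bar>h x\<bar> \<le> B"
    and e: "0 \<le> ep n" "ep n \<le> 1"
  shows "(\<integral>x. h x \<partial>mu n) = ep n * (\<integral>u. h (al n + be n * u) \<partial>\<nu>)
           + (1 - ep n) * (\<integral>t. (\<integral>u. h (qq n t + u / mm n) \<partial>\<nu>) \<partial>\<gamma>)"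
proof -
  interpret \<nu>p: prob_space \<nu> by (rule \<nu>prob)
  interpret Up: prob_space U01 by (rule U01_prob)
  interpret \<gamma>p: prob_space \<gamma> by (rule \<gamma>prob)
  interpret P2: pair_prob_space U01 \<nu> by unfold_locales
  interpret P1: pair_prob_space \<gamma> "U01 \<Otimes>\<^sub>M \<nu>"
    by (simp add: pair_prob_space_def pair_sigma_finite_def prob_space_imp_sigma_finite
        prob_space_pair U01_prob \<nu>prob \<gamma>prob)
  define I1 where "I1 = (\<integral>u. h (al n + be n * u) \<partial>\<nu>)"
  define I2 where "I2 t = (\<integral>u. h (qq n t + u / mm n) \<partial>\<nu>)" for t
  have I2m[measurable]: "I2 \<in> borel_measurable \<gamma>" unfolding I2_def by (rule I2_meas[OF h])
  have I2B: "\<bar>I2 t\<bar> \<le> B" for t unfolding I2_def by (rule bdd_integral[OF \<nu>prob _ hB]) simp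
  have I1B: "\<bar>I1\<bar> \<le> B" unfolding I1_def by (rule bdd_integral[OF \<nu>prob _ hB]) simp
  have "(\<integral>x. h x \<partial>mu n) = (\<integral>x. h (Psi n x) \<partial>MM)"
    unfolding mu_def by (rule integral_distr) simp_all
  also have "\<dots> = (\<integral>t. (\<integral>w. h (Psi n (t, w)) \<partial>(U01 \<Otimes>\<^sub>M \<nu>)) \<partial>\<gamma>)"
    unfolding MM_def
    by (rule P1.integral_fst'[symmetric], rule bdd_integrable[OF P1.prob_space_axioms _ hB]) simp
  also have "\<dots> = (\<integral>t. I2 t + (I1 - I2 t) * ep n \<partial>\<gamma>)"
  proof -
    have "(\<integral>w. h (Psi n (t, w)) \<partial>(U01 \<Otimes>\<^sub>M \<nu>)) = I2 t + (I1 - I2 t) * ep n" for t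
    proof -
    have "(\<integral>w. h (Psi n (t, w)) \<partial>(U01 \<Otimes>\<^sub>M \<nu>)) = (\<integral>v. (\<integral>u. h (Psi n (t, v, u)) \<partial>\<nu>) \<partial>U01)"
      by (rule P2.integral_fst'[symmetric], rule bdd_integrable[OF P2.prob_space_axioms _ hB])
        (rule Psi_slice[OF h])
    also have "\<dots> = (\<integral>v. I2 t + (I1 - I2 t) * indicator {..<ep n} v \<partial>U01)"
      by (rule Bochner_Integration.integral_cong[OF HOL.refl]) (simp add: Psi_def I1_def I2_def indicator_def)
    also have "\<dots> = I2 t + (I1 - I2 t) * measure U01 {..<ep n}"
    proof -
      have "{..<ep n} \<in> sets U01" by (simp add: sets_U01)
      then have ii: "integrable U01 (\<lambda>v. (I1 - I2 t) * indicator {..<ep n} v)"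
        by (intro integrable_mult_right integrable_real_indicator) (auto simp: Up.emeasure_finite less_top[symmetric])
      have "(\<integral>v. I2 t + (I1 - I2 t) * indicator {..<ep n} v \<partial>U01)
          = (\<integral>v. I2 t \<partial>U01) + (\<integral>v. (I1 - I2 t) * indicator {..<ep n} v \<partial>U01)"
        by (rule Bochner_Integration.integral_add[OF _ ii]) simp
      also have "\<dots> = I2 t + (I1 - I2 t) * measure U01 {..<ep n}"
        using \<open>{..<ep n} \<in> sets U01\<close> by (simp add: Up.prob_space less_top[symmetric] Up.emeasure_finite)
      finally show ?thesis .
    qed
    also have "\<dots> = I2 t + (I1 - I2 t) * ep n" using measure_U01_less[OF e] by simp
    finally show ?thesis .
    qed
    then show ?thesis by simp
  qed
  also have "\<dots> = (\<integral>t. (1 - ep n) * I2 t + ep n * I1 \<partial>\<gamma>)"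
    by (rule Bochner_Integration.integral_cong[OF HOL.refl]) (simp add: algebra_simps)
  also have "\<dots> = (1 - ep n) * (\<integral>t. I2 t \<partial>\<gamma>) + ep n * I1"
    using bdd_integrable[OF \<gamma>prob I2m I2B] by (simp add: \<gamma>p.prob_space)
  finally show ?thesis unfolding I1_def I2_def by simp
qed


lemma qq_lim: "(\<lambda>n. qq n t + u / mm n) \<longlonglongrightarrow> t"
proof -
  have inv: "(\<lambda>n. inverse (mm n)) \<longlonglongrightarrow> 0" unfolding mm_def by (rule LIMSEQ_inverse_real_of_nat)
  have "(\<lambda>n. qq n t - t) \<longlonglongrightarrow> 0"
  proof (rule Lim_null_comparison[OF _ inv])
    show "\<forall>\<^sub>F n in sequentially. norm (qq n t - t) \<le> inverse (mm n)"
    proof (intro always_eventually allI)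
      fix n
      have m: "0 < mm n" by (rule mm_pos)
      have c1: "mm n * t \<le> of_int \<lceil>mm n * t\<rceil>" "of_int \<lceil>mm n * t\<rceil> < mm n * t + 1" by linarith+
      have "qq n t - t = (of_int \<lceil>mm n * t\<rceil> - mm n * t) / mm n" unfolding qq_def using m by (simp add: field_simps)
      moreover have "0 \<le> (of_int \<lceil>mm n * t\<rceil> - mm n * t) / mm n" using c1 m by simp
      moreover have "(of_int \<lceil>mm n * t\<rceil> - mm n * t) / mm n \<le> 1 / mm n" using c1 m by (simp add: divide_right_mono)
      ultimately show "norm (qq n t - t) \<le> inverse (mm n)" by (simp add: inverse_eq_divide)
    qed
  qed
  moreover have "(\<lambda>n. u * inverse (mm n)) \<longlonglongrightarrow> 0" using tendsto_mult[OF tendsto_const inv, of u] by simp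
  ultimately have "(\<lambda>n. t + (qq n t - t) + u * inverse (mm n)) \<longlonglongrightarrow> t + 0 + 0"
    by (intro tendsto_add tendsto_const)
  then show ?thesis by (simp add: divide_inverse)
qed

lemma J_lim:
  fixes h :: "real \<Rightarrow> real"
  assumes hc: "continuous_on UNIV h" and hB: "\<And>x. \<bar>h x\<bar> \<le> B"
  shows "(\<lambda>n. \<integral>t. (\<integral>u. h (qq n t + u / mm n) \<partial>\<nu>) \<partial>\<gamma>) \<longlonglongrightarrow> (\<integral>t. h t \<partial>\<gamma>)"
proof -
  interpret \<nu>p: prob_space \<nu> by (rule \<nu>prob)
  interpret \<gamma>p: prob_space \<gamma> by (rule \<gamma>prob)
  have h[measurable]: "h \<in> borel_measurable borel" using hc by (rule borel_measurable_continuous_onI)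
  have pt: "(\<lambda>n. \<integral>u. h (qq n t + u / mm n) \<partial>\<nu>) \<longlonglongrightarrow> h t" for t
  proof -
    have "(\<lambda>n. \<integral>u. h (qq n t + u / mm n) \<partial>\<nu>) \<longlonglongrightarrow> (\<integral>u. h t \<partial>\<nu>)"
    proof (rule integral_dominated_convergence[where w="\<lambda>_. B"])
      show "(\<lambda>u. h t) \<in> borel_measurable \<nu>" by simp
      show "(\<lambda>u. h (qq n t + u / mm n)) \<in> borel_measurable \<nu>" for n by measurable
      show "integrable \<nu> (\<lambda>_. B)" by simp
      show "AE u in \<nu>. (\<lambda>n. h (qq n t + u / mm n)) \<longlonglongrightarrow> h t"
      proof (rule AE_I2)
        fix u
        have "isCont h t" using hc by (simp add: continuous_on_eq_continuous_at)
        then show "(\<lambda>n. h (qq n t + u / mm n)) \<longlonglongrightarrow> h t"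
          using qq_lim[of t u] by (rule isCont_tendsto_compose)
      qed
      show "AE u in \<nu>. norm (h (qq n t + u / mm n)) \<le> B" for n using hB by simp
    qed
    then show ?thesis by (simp add: \<nu>p.prob_space)
  qed
  show ?thesis
  proof (rule integral_dominated_convergence[where w="\<lambda>_. B"])
    show "h \<in> borel_measurable \<gamma>" by (rule meas_of_borel[OF sets_\<gamma> h])
    show "(\<lambda>t. \<integral>u. h (qq n t + u / mm n) \<partial>\<nu>) \<in> borel_measurable \<gamma>" for n by (rule I2_meas[OF h])
    show "integrable \<gamma> (\<lambda>_. B)" by simp
    show "AE t in \<gamma>. (\<lambda>n. \<integral>u. h (qq n t + u / mm n) \<partial>\<nu>) \<longlonglongrightarrow> h t" using pt by simp
    show "AE t in \<gamma>. norm (\<integral>u. h (qq n t + u / mm n) \<partial>\<nu>) \<le> B" for n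
      using bdd_integral[OF \<nu>prob _ hB] by simp
  qed
qed

lemma aa_lim: "aa \<longlonglongrightarrow> 1/2"
  unfolding aa_def ghat_int_\<gamma>[symmetric] by (rule J_lim[OF ghat_cont ghat_abs])

lemma aa_bounds: "0 \<le> aa n" "aa n \<le> 1"
proof -
  interpret \<nu>p: prob_space \<nu> by (rule \<nu>prob)
  show "0 \<le> aa n" unfolding aa_def
    by (intro Bochner_Integration.integral_nonneg) (simp add: ghat_bounds)
  have "\<bar>aa n\<bar> \<le> 1" unfolding aa_def
    by (rule bdd_integral[OF \<gamma>prob I2_meas[OF ghat_meas]]) (rule bdd_integral[OF \<nu>prob _ ghat_abs], simp)
  then show "aa n \<le> 1" by simp
qed

lemma c0_facts: "0 < c0" "2 * c0 \<le> 1" "real (d - 1) * (2 * c0) < 1/2"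
proof -
  have d: "real d \<ge> 3" using d3 by simp
  show "0 < c0" unfolding c0_def using d by simp
  show "2 * c0 \<le> 1" unfolding c0_def using d by (simp add: field_simps)
  have "real (d - 1) = real d - 1" using d3 by simp
  then show "real (d - 1) * (2 * c0) < 1/2" unfolding c0_def using d by (simp add: field_simps)
qed

lemma cst_gt: "cst > 1/2"
proof -
  interpret \<nu>p: prob_space \<nu> by (rule \<nu>prob)
  have "(1 - 2*c0) ^ (d - 1) \<ge> 1 + real (d - 1) * (- 2*c0)"
    using Bernoulli_inequality[of "-2*c0" "d-1"] c0_facts by simp
  then have b: "(1 - 2*c0) ^ (d - 1) > 1/2" using c0_facts by simp
  have "(\<integral>u. (1 - 2*c0) ^ (d - 1) \<partial>\<nu>) \<le> cst" unfolding cst_def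
  proof (rule integral_mono_AE)
    show "integrable \<nu> (\<lambda>u. ghat d (c0 + c0 * u))"
      by (rule bdd_integrable[OF \<nu>prob _ ghat_abs]) simp
    show "AE u in \<nu>. (1 - 2*c0) ^ (d - 1) \<le> ghat d (c0 + c0 * u)"
      using \<nu>01
    proof eventually_elim
      case (elim u)
      have "c0 * u \<le> c0" using elim c0_facts by (simp add: mult_left_le)
      moreover have "0 \<le> c0 * u" using elim c0_facts by simp
      moreover have "c0 + c0 * u \<le> 1" using \<open>c0 * u \<le> c0\<close> c0_facts by linarith
      ultimately have "min 1 (max 0 (c0 + c0 * u)) = c0 + c0 * u" using c0_facts by simp
      moreover have "1 - 2*c0 \<le> 1 - (c0 + c0 * u)" using \<open>c0 * u \<le> c0\<close> by simp
      moreover have "0 \<le> 1 - 2*c0" using c0_facts by simp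
      ultimately show ?case unfolding ghat_def by (simp add: power_mono)
    qed
  qed simp
  then show ?thesis using b by (simp add: \<nu>p.prob_space)
qed

lemma ghat_far: "(\<integral>u. ghat d (2 + 1 * u) \<partial>\<nu>) = 0"
proof -
  have "(\<integral>u. ghat d (2 + 1 * u) \<partial>\<nu>) = (\<integral>u. 0 \<partial>\<nu>)"
  proof (rule integral_cong_AE)
    show "(\<lambda>u. ghat d (2 + 1 * u)) \<in> borel_measurable \<nu>" by simp
    show "(\<lambda>u. 0::real) \<in> borel_measurable \<nu>" by simp
    show "AE u in \<nu>. ghat d (2 + 1 * u) = 0" using \<nu>01
    proof eventually_elim
      case (elim u)
      have "d - 1 \<noteq> 0" using d3 by simp
      then show ?case using elim unfolding ghat_def by simp
    qed
  qed
  then show ?thesis by simp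
qed

lemma ep_bounds_conj: "0 \<le> ep n \<and> ep n \<le> 1"
proof (cases "aa n \<ge> 1/2")
  case True
  have a: "aa n \<le> 1" using aa_bounds[of n] by simp
  have a0: "aa n > 0" using True by simp
  have "ep n = (aa n - 1/2) / aa n" using True by (simp add: ep_def)
  moreover have "0 \<le> (aa n - 1/2) / aa n" using True a0 by simp
  moreover have "(aa n - 1/2) / aa n \<le> 1" using a0 a by (simp add: pos_divide_le_eq)
  ultimately show ?thesis by simp
next
  case False
  have a: "aa n \<ge> 0" using aa_bounds[of n] by simp
  have c: "cst - aa n > 0" using False cst_gt by simp
  have "ep n = (1/2 - aa n) / (cst - aa n)" using False by (simp add: ep_def)
  moreover have "0 \<le> (1/2 - aa n) / (cst - aa n)" using False c by simp
  moreover have "(1/2 - aa n) / (cst - aa n) \<le> 1" using c cst_gt by (simp add: pos_divide_le_eq)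
  ultimately show ?thesis by simp
qed

lemma ep_bounds: "0 \<le> ep n" "ep n \<le> 1" using ep_bounds_conj[of n] by auto

lemma ep_lim: "ep \<longlonglongrightarrow> 0"
proof -
  define K where "K = max 2 (1 / (cst - 1/2))"
  have c: "cst - 1/2 > 0" using cst_gt by simp
  have bnd: "norm (ep n) \<le> K * \<bar>aa n - 1/2\<bar>" for n
  proof (cases "aa n \<ge> 1/2")
    case True
    have "ep n = (aa n - 1/2) / aa n" using True by (simp add: ep_def)
    also have "\<dots> \<le> 2 * (aa n - 1/2)"
    proof -
      have a0: "aa n > 0" using True by simp
      have "(aa n - 1/2) * 1 \<le> (aa n - 1/2) * (2 * aa n)" using True by (intro mult_left_mono) auto
      then have "aa n - 1/2 \<le> (2 * (aa n - 1/2)) * aa n" by (simp add: algebra_simps)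
      then show ?thesis by (subst pos_divide_le_eq[OF a0])
    qed
    also have "\<dots> \<le> K * \<bar>aa n - 1/2\<bar>"
    proof -
      have "\<bar>aa n - 1/2\<bar> = aa n - 1/2" using True by simp
      moreover have "2 * (aa n - 1/2) \<le> K * (aa n - 1/2)" unfolding K_def using True
        by (intro mult_right_mono) auto
      ultimately show ?thesis by simp
    qed
    finally show ?thesis using ep_bounds[of n] by simp
  next
    case False
    have "ep n = (1/2 - aa n) / (cst - aa n)" using False by (simp add: ep_def)
    also have "\<dots> \<le> (1/2 - aa n) / (cst - 1/2)"
      using False c by (intro divide_left_mono) auto
    also have "\<dots> = (1 / (cst - 1/2)) * \<bar>aa n - 1/2\<bar>" using False by simp
    also have "\<dots> \<le> K * \<bar>aa n - 1/2\<bar>" unfolding K_def by (intro mult_right_mono) auto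
    finally show ?thesis using ep_bounds[of n] by simp
  qed
  have "(\<lambda>n. aa n - 1/2) \<longlonglongrightarrow> 0" using aa_lim by (rule LIM_zero)
  then have "(\<lambda>n. K * \<bar>aa n - 1/2\<bar>) \<longlonglongrightarrow> 0"
    by (intro tendsto_mult_right_zero tendsto_rabs_zero)
  then show ?thesis by (rule Lim_null_comparison[OF always_eventually[OF allI[OF bnd]]])
qed

lemma mu_ghat: "(\<integral>x. ghat d x \<partial>mu n) = 1/2"
proof -
  have f: "(\<integral>x. ghat d x \<partial>mu n) = ep n * (\<integral>u. ghat d (al n + be n * u) \<partial>\<nu>) + (1 - ep n) * aa n"
    unfolding aa_def by (rule formula[OF ghat_meas ghat_abs ep_bounds])
  show ?thesis
  proof (cases "aa n \<ge> 1/2")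
    case True
    then have "(\<integral>u. ghat d (al n + be n * u) \<partial>\<nu>) = 0" unfolding al_def be_def using ghat_far by simp
    moreover have "aa n > 0" using True by simp
    moreover have "ep n * aa n = aa n - 1/2" using True \<open>aa n > 0\<close> by (simp add: ep_def)
    ultimately show ?thesis unfolding f by (simp add: algebra_simps)
  next
    case False
    then have "(\<integral>u. ghat d (al n + be n * u) \<partial>\<nu>) = cst" unfolding al_def be_def cst_def by simp
    moreover have "cst - aa n > 0" using False cst_gt by simp
    moreover have "ep n * (cst - aa n) = 1/2 - aa n" using False \<open>cst - aa n > 0\<close> by (simp add: ep_def)
    moreover have "ep n * cst + (1 - ep n) * aa n = aa n + ep n * (cst - aa n)" by (simp add: algebra_simps)
    ultimately show ?thesis unfolding f by simp
  qed
qed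


lemma space_MM: "space MM = UNIV"
  unfolding MM_def by (simp add: space_pair_measure space_\<gamma> space_U01 space_\<nu>)

lemma mu_null:
  assumes A[measurable]: "A \<in> sets borel"
    and n1: "emeasure \<nu> {u. al n + be n * u \<in> A} = 0"
    and n2: "\<And>t. 0 < t \<Longrightarrow> emeasure \<nu> {u. qq n t + u / mm n \<in> A} = 0"
  shows "emeasure (mu n) A = 0"
proof -
  interpret \<nu>p: prob_space \<nu> by (rule \<nu>prob)
  interpret Up: prob_space U01 by (rule U01_prob)
  interpret \<gamma>p: prob_space \<gamma> by (rule \<gamma>prob)
  interpret UN: prob_space "U01 \<Otimes>\<^sub>M \<nu>" by (rule prob_space_pair[OF U01_prob \<nu>prob])
  define S where "S = Psi n -` A \<inter> space MM"
  have S: "S \<in> sets MM" unfolding S_def by (rule measurable_sets[OF Psi_meas A])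
  have S': "S \<in> sets (\<gamma> \<Otimes>\<^sub>M (U01 \<Otimes>\<^sub>M \<nu>))" using S by (simp add: MM_def)
  have "emeasure (mu n) A = emeasure MM S"
    unfolding mu_def S_def by (rule emeasure_distr) simp_all
  also have "\<dots> = (\<integral>\<^sup>+t. emeasure (U01 \<Otimes>\<^sub>M \<nu>) (Pair t -` S) \<partial>\<gamma>)"
    unfolding MM_def by (rule UN.emeasure_pair_measure_alt[OF S'])
  also have "\<dots> = (\<integral>\<^sup>+t. 0 \<partial>\<gamma>)"
  proof (rule nn_integral_cong_AE)
    show "AE t in \<gamma>. emeasure (U01 \<Otimes>\<^sub>M \<nu>) (Pair t -` S) = 0" using \<gamma>pos
    proof eventually_elim
      case (elim t)
      have St: "Pair t -` S \<in> sets (U01 \<Otimes>\<^sub>M \<nu>)" by (rule sets_Pair1[OF S'])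
      have "emeasure (U01 \<Otimes>\<^sub>M \<nu>) (Pair t -` S) = (\<integral>\<^sup>+v. emeasure \<nu> (Pair v -` (Pair t -` S)) \<partial>U01)"
        by (rule \<nu>p.emeasure_pair_measure_alt[OF St])
      also have "\<dots> = (\<integral>\<^sup>+v. 0 \<partial>U01)"
      proof (rule nn_integral_cong)
        fix v
        have "Pair v -` (Pair t -` S) = (if v < ep n then {u. al n + be n * u \<in> A} else {u. qq n t + u / mm n \<in> A})"
          unfolding S_def space_MM by (auto simp: Psi_def)
        then show "emeasure \<nu> (Pair v -` (Pair t -` S)) = 0" using n1 n2[OF elim] by simp
      qed
      finally show ?case by simp
    qed
  qed
  finally show ?thesis by simp
qed

lemma \<nu>null_AE:
  assumes "B \<in> sets borel" "AE u in \<nu>. u \<notin> B"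
  shows "emeasure \<nu> B = 0"
proof -
  have "B = {u \<in> space \<nu>. \<not> u \<notin> B}" by (simp add: space_\<nu>)
  then show ?thesis using AE_iff_measurable[of B \<nu> "\<lambda>u. u \<notin> B"] assms by (simp add: sets_\<nu>)
qed

lemma al_be_pos: "0 < al n" "0 < be n"
  unfolding al_def be_def using c0_facts by auto

lemma mu_nonpos: "emeasure (mu n) {..0} = 0"
proof (rule mu_null)
  show "emeasure \<nu> {u. al n + be n * u \<in> {..0}} = 0"
  proof (rule \<nu>null_AE)
    show "{u. al n + be n * u \<in> {..0}} \<in> sets borel" by measurable
    show "AE u in \<nu>. u \<notin> {u. al n + be n * u \<in> {..0}}" using \<nu>01
    proof eventually_elim
      case (elim u)
      have "0 \<le> be n * u" using elim less_imp_le[OF al_be_pos(2)] by simp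
      then show ?case using al_be_pos(1)[of n] by simp
    qed
  qed
  fix t :: real assume t: "0 < t"
  show "emeasure \<nu> {u. qq n t + u / mm n \<in> {..0}} = 0"
  proof (rule \<nu>null_AE)
    show "{u. qq n t + u / mm n \<in> {..0}} \<in> sets borel" by measurable
    show "AE u in \<nu>. u \<notin> {u. qq n t + u / mm n \<in> {..0}}" using \<nu>01
    proof eventually_elim
      case (elim u)
      have m: "0 < mm n" by (rule mm_pos)
      have "0 < mm n * t" using m t by simp
      then have "1 \<le> \<lceil>mm n * t\<rceil>" by linarith
      then have "0 < qq n t" unfolding qq_def using m by simp
      moreover have "0 \<le> u / mm n" using elim m by simp
      ultimately show ?case by simp
    qed
  qed
qed simp

lemma mu_half: "prob_on_halfline (mu n)"
proof -
  have "emeasure (mu n) {..<0} \<le> emeasure (mu n) {..0}"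
    by (rule emeasure_mono) (auto simp: sets_mu)
  then have "emeasure (mu n) {..<0} = 0" using mu_nonpos by simp
  then show ?thesis unfolding prob_on_halfline_def using mu_prob sets_mu by simp
qed

lemma mu_PW: "mu n \<in> PW d"
proof -
  have "emeasure (mu n) {0} \<le> emeasure (mu n) {..0}"
    by (rule emeasure_mono) (auto simp: sets_mu)
  then have "emeasure (mu n) {0} = 0" using mu_nonpos by simp
  moreover have "(LINT t:{0..1}|mu n. (1 - t) ^ (d - 1)) = 1/2"
    using lint_ghat[OF mu_half, of d] d3 mu_ghat by simp
  ultimately show ?thesis unfolding PW_def using mu_half by simp
qed

lemma mu_weak: "weak_conv_halfline mu \<gamma>"
  unfolding weak_conv_halfline_def
proof (intro allI impI)
  fix f :: "real \<Rightarrow> real"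
  assume fa: "continuous_on {0..} f \<and> bounded (f ` {0..})"
  show "(\<lambda>n. integral\<^sup>L (mu n) f) \<longlonglongrightarrow> integral\<^sup>L \<gamma> f"
  proof (cases "f \<in> borel_measurable borel")
    case False
    then show ?thesis using nonmeas_integral[OF sets_mu False] nonmeas_integral[OF sets_\<gamma> False] by simp
  next
    case True
    note fm[measurable] = True
    obtain B where B: "\<And>x. x \<in> {0..} \<Longrightarrow> \<bar>f x\<bar> \<le> B"
      using fa unfolding bounded_iff by auto
    define f' where "f' x = f (max 0 x)" for x
    have f'c: "continuous_on UNIV f'" unfolding f'_def
      by (rule continuous_on_compose2[of "{0..}" f UNIV "\<lambda>x. max 0 x"]) (use fa in \<open>auto intro!: continuous_intros\<close>)
    have f'B: "\<bar>f' x\<bar> \<le> B" for x unfolding f'_def by (rule B) simp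
    have f'm[measurable]: "f' \<in> borel_measurable borel" unfolding f'_def by measurable
    have eqM: "integral\<^sup>L M f = integral\<^sup>L M f'" if M: "prob_on_halfline M" for M
    proof -
      have sM: "sets M = sets borel" using M unfolding prob_on_halfline_def by auto
      show ?thesis
      proof (rule integral_cong_AE)
        show "f \<in> borel_measurable M" by (rule meas_of_borel[OF sM fm])
        show "f' \<in> borel_measurable M" by (rule meas_of_borel[OF sM f'm])
        show "AE x in M. f x = f' x" using halfline_AE[OF M] by eventually_elim (simp add: f'_def)
      qed
    qed
    have F: "integral\<^sup>L (mu n) f = ep n * (\<integral>u. f' (al n + be n * u) \<partial>\<nu>)
           + (1 - ep n) * (\<integral>t. (\<integral>u. f' (qq n t + u / mm n) \<partial>\<nu>) \<partial>\<gamma>)" for n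
      unfolding eqM[OF mu_half] by (rule formula[OF f'm f'B ep_bounds])
    have l1: "(\<lambda>n. ep n * (\<integral>u. f' (al n + be n * u) \<partial>\<nu>)) \<longlonglongrightarrow> 0"
    proof (rule Lim_null_comparison)
      show "\<forall>\<^sub>F n in sequentially. norm (ep n * (\<integral>u. f' (al n + be n * u) \<partial>\<nu>)) \<le> ep n * B"
      proof (intro always_eventually allI)
        fix n
        have "\<bar>\<integral>u. f' (al n + be n * u) \<partial>\<nu>\<bar> \<le> B" by (rule bdd_integral[OF \<nu>prob _ f'B]) simp
        then show "norm (ep n * (\<integral>u. f' (al n + be n * u) \<partial>\<nu>)) \<le> ep n * B"
          using ep_bounds[of n] by (simp add: abs_mult mult_left_mono)
      qed
      show "(\<lambda>n. ep n * B) \<longlonglongrightarrow> 0" using tendsto_mult[OF ep_lim tendsto_const[of B]] by simp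
    qed
    have l2: "(\<lambda>n. (1 - ep n) * (\<integral>t. (\<integral>u. f' (qq n t + u / mm n) \<partial>\<nu>) \<partial>\<gamma>)) \<longlonglongrightarrow> (1 - 0) * integral\<^sup>L \<gamma> f'"
      by (intro tendsto_mult tendsto_diff tendsto_const ep_lim J_lim[OF f'c f'B])
    have "(\<lambda>n. integral\<^sup>L (mu n) f) \<longlonglongrightarrow> 0 + (1 - 0) * integral\<^sup>L \<gamma> f'"
      unfolding F by (rule tendsto_add[OF l1 l2])
    then show ?thesis using eqM[OF \<gamma>half] by simp
  qed
qed

end


definition nuC :: "real measure" where "nuC = distr U01 borel cantorf"

lemma nuC_prob: "prob_space nuC"
  unfolding nuC_def by (rule prob_space.prob_space_distr[OF U01_prob]) simp

lemma sets_nuC[measurable_cong]: "sets nuC = sets borel"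
  unfolding nuC_def by simp

lemma nuC_01: "AE u in nuC. 0 \<le> u \<and> u \<le> 1"
  unfolding nuC_def by (subst AE_distr_iff) (auto simp: cantorf_bounds)

lemma nuC_Kc: "emeasure nuC (UNIV - Kc) = 0"
proof -
  have "emeasure nuC (UNIV - Kc) = emeasure U01 (cantorf -` (UNIV - Kc) \<inter> space U01)"
    unfolding nuC_def by (rule emeasure_distr) simp_all
  also have "cantorf -` (UNIV - Kc) = {}" using cantorf_Kc by auto
  finally show ?thesis by simp
qed

lemma nuC_atom: "emeasure nuC {x} = 0"
proof -
  define T where "T = {0..<1} \<inter> cantorf -` {x}"
  have fT: "finite T"
  proof (cases "T = {}")
    case False
    then obtain y where y: "y \<in> T" by auto
    have "T \<subseteq> {y}" using y cantorf_inj01 unfolding T_def by auto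
    then show ?thesis using finite_subset by blast
  qed simp
  have sub: "{0..1} \<inter> cantorf -` {x} \<subseteq> insert 1 T" unfolding T_def by auto
  have fin: "finite ({0..1} \<inter> cantorf -` {x})" by (rule finite_subset[OF sub]) (use fT in simp)
  have "emeasure nuC {x} = emeasure U01 (cantorf -` {x} \<inter> space U01)"
    unfolding nuC_def by (rule emeasure_distr) simp_all
  also have "\<dots> = emeasure lborel ({0..1} \<inter> cantorf -` {x})"
    by (simp add: space_U01_g) (rule emeasure_U01, rule measurable_sets_borel[OF cantorf_measurable], simp)
  also have "\<dots> = 0" using finite_imp_null_set_lborel[OF fin] by auto
  finally show ?thesis .
qed


lemma affine_Kc_null: "c \<noteq> 0 \<Longrightarrow> (\<lambda>y. t + c * y) -` Kc \<in> null_sets lborel"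
  using lborel_affine_null[OF Kc_borel _ Kc_null, of c t] vimage_affine_borel[OF Kc_borel, of t c]
  by (simp add: null_sets_def)

lemma U01_affine_null:
  assumes N: "N \<in> null_sets lborel" and c: "c \<noteq> 0"
  shows "emeasure U01 ((\<lambda>u. t + c * u) -` N) = 0"
proof -
  have Nb: "N \<in> sets borel" using N by (simp add: null_sets_def)
  have "emeasure U01 ((\<lambda>u. t + c * u) -` N) = emeasure lborel ({0..1} \<inter> (\<lambda>u. t + c * u) -` N)"
    by (rule emeasure_U01[OF vimage_affine_borel[OF Nb]])
  also have "\<dots> \<le> emeasure lborel ((\<lambda>u. t + c * u) -` N)"
    by (rule emeasure_mono) (auto simp: vimage_affine_borel[OF Nb])
  also have "\<dots> = 0" by (rule lborel_affine_null[OF Nb c]) (use N in \<open>simp add: null_sets_def\<close>)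
  finally show ?thesis by simp
qed

lemma exists_discrete:
  assumes "d \<ge> 3" "\<gamma> \<in> PW d"
  shows "\<exists>\<gamma>1 :: nat \<Rightarrow> real measure. (\<forall>n. \<gamma>1 n \<in> PW d \<and> discrete_measure (\<gamma>1 n)) \<and> weak_conv_halfline \<gamma>1 \<gamma>"
proof -
  have p: "prob_space (return borel (0::real))" by (rule prob_space_return) simp
  have a: "AE u in return borel 0. 0 \<le> u \<and> u \<le> (1::real)" by (subst AE_return) auto
  have cc: "constr d \<gamma> (return borel 0)" unfolding constr_def by (intro conjI assms p a) simp
  interpret c: constr d \<gamma> "return borel 0" by (rule cc)
  have "discrete_measure (c.mu n)" for n
  proof -
    define D where "D = insert (c.al n) (range (\<lambda>k::int. of_int k / c.mm n))"
    have cD: "countable D" unfolding D_def by simp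
    have sD[measurable]: "D \<in> sets borel" by (rule sets.countable[OF _ cD]) simp
    have "emeasure (c.mu n) (UNIV - D) = 0"
    proof (rule c.mu_null)
      show "UNIV - D \<in> sets borel" using sD by auto
      have m1: "{u. c.al n + c.be n * u \<in> UNIV - D} \<in> sets borel" by measurable
      have "c.al n + c.be n * 0 \<in> D" unfolding D_def by simp
      then show "emeasure (return borel 0) {u. c.al n + c.be n * u \<in> UNIV - D} = 0"
        using emeasure_return[OF m1, of 0] by (simp add: indicator_def)
      fix t :: real
      have m2: "{u. c.qq n t + u / c.mm n \<in> UNIV - D} \<in> sets borel" by measurable
      have "c.qq n t + 0 / c.mm n \<in> D" unfolding D_def c.qq_def
        by (rule insertI2, rule image_eqI[where x="\<lceil>c.mm n * t\<rceil>"]) simp_all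
      then show "emeasure (return borel 0) {u. c.qq n t + u / c.mm n \<in> UNIV - D} = 0"
        using emeasure_return[OF m2, of 0] by (simp add: indicator_def)
    qed
    moreover have "space (c.mu n) = UNIV" unfolding c.mu_def by simp
    ultimately show ?thesis unfolding discrete_measure_def using cD sD c.sets_mu[of n] by metis
  qed
  then show ?thesis using c.mu_PW c.mu_weak by blast
qed

lemma exists_singular:
  assumes "d \<ge> 3" "\<gamma> \<in> PW d"
  shows "\<exists>\<gamma>2 :: nat \<Rightarrow> real measure. (\<forall>n. \<gamma>2 n \<in> PW d \<and> singular_measure (\<gamma>2 n) \<and> no_atoms (\<gamma>2 n))
            \<and> weak_conv_halfline \<gamma>2 \<gamma>"
proof -
  have cc: "constr d \<gamma> nuC" unfolding constr_def by (intro conjI assms nuC_prob sets_nuC nuC_01)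
  interpret c: constr d \<gamma> nuC by (rule cc)
  have sing: "singular_measure (c.mu n)" for n
  proof -
    have be: "c.be n \<noteq> 0" using c.al_be_pos[of n] by simp
    have m: "c.mm n \<noteq> 0" using c.mm_pos[of n] by simp
    define N where "N = (\<lambda>y. - c.al n / c.be n + (1 / c.be n) * y) -` Kc \<union> (\<Union>k::int. (\<lambda>y. - of_int k + c.mm n * y) -` Kc)"
    have Nn: "N \<in> null_sets lborel" unfolding N_def
      using be m by (intro null_sets.Un null_sets_UN affine_Kc_null) auto
    then have Nb[measurable]: "N \<in> sets borel" by (simp add: null_sets_def)
    have "emeasure (c.mu n) (UNIV - N) = 0"
    proof (rule c.mu_null)
      show "UNIV - N \<in> sets borel" by auto
      have "{u. c.al n + c.be n * u \<in> UNIV - N} \<subseteq> UNIV - Kc"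
      proof
        fix u assume "u \<in> {u. c.al n + c.be n * u \<in> UNIV - N}"
        moreover have "- c.al n / c.be n + (1 / c.be n) * (c.al n + c.be n * u) = u"
          using be by (simp add: field_simps)
        ultimately show "u \<in> UNIV - Kc" unfolding N_def by auto
      qed
      then have "emeasure nuC {u. c.al n + c.be n * u \<in> UNIV - N} \<le> emeasure nuC (UNIV - Kc)"
        by (intro emeasure_mono) (auto simp: sets_nuC)
      then show "emeasure nuC {u. c.al n + c.be n * u \<in> UNIV - N} = 0" using nuC_Kc by simp
      fix t :: real
      have "{u. c.qq n t + u / c.mm n \<in> UNIV - N} \<subseteq> UNIV - Kc"
      proof
        fix u assume "u \<in> {u. c.qq n t + u / c.mm n \<in> UNIV - N}"
        then have nN: "c.qq n t + u / c.mm n \<notin> N" by simp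
        have eq: "- of_int \<lceil>c.mm n * t\<rceil> + c.mm n * (c.qq n t + u / c.mm n) = u"
          using m by (simp add: c.qq_def field_simps)
        show "u \<in> UNIV - Kc"
        proof
          show "u \<in> UNIV" by simp
          show "u \<notin> Kc"
          proof
            assume "u \<in> Kc"
            then have "c.qq n t + u / c.mm n \<in> (\<lambda>y. - of_int \<lceil>c.mm n * t\<rceil> + c.mm n * y) -` Kc"
              using eq by simp
            then have "c.qq n t + u / c.mm n \<in> N" unfolding N_def by blast
            then show False using nN by simp
          qed
        qed
      qed
      then have "emeasure nuC {u. c.qq n t + u / c.mm n \<in> UNIV - N} \<le> emeasure nuC (UNIV - Kc)"
        by (intro emeasure_mono) (auto simp: sets_nuC)
      then show "emeasure nuC {u. c.qq n t + u / c.mm n \<in> UNIV - N} = 0" using nuC_Kc by simp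
    qed
    moreover have "space (c.mu n) = UNIV" unfolding c.mu_def by simp
    ultimately show ?thesis unfolding singular_measure_def using Nn Nb
      by (auto simp: null_sets_def intro!: bexI[of _ N])
  qed
  have atoms: "no_atoms (c.mu n)" for n
    unfolding no_atoms_def
  proof
    fix x :: real
    have be: "c.be n \<noteq> 0" using c.al_be_pos[of n] by simp
    have m: "c.mm n \<noteq> 0" using c.mm_pos[of n] by simp
    show "emeasure (c.mu n) {x} = 0"
    proof (rule c.mu_null)
      have "{u. c.al n + c.be n * u \<in> {x}} = {(x - c.al n) / c.be n}" using be by (auto simp: field_simps)
      then show "emeasure nuC {u. c.al n + c.be n * u \<in> {x}} = 0" using nuC_atom by simp
      fix t :: real
      have "{u. c.qq n t + u / c.mm n \<in> {x}} = {(x - c.qq n t) * c.mm n}" using m by (auto simp: field_simps)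
      then show "emeasure nuC {u. c.qq n t + u / c.mm n \<in> {x}} = 0" using nuC_atom by simp
    qed simp
  qed
  show ?thesis using c.mu_PW c.mu_weak sing atoms by blast
qed

lemma exists_ac:
  assumes "d \<ge> 3" "\<gamma> \<in> PW d"
  shows "\<exists>\<gamma>3 :: nat \<Rightarrow> real measure. (\<forall>n. \<gamma>3 n \<in> PW d \<and> abs_cont_measure (\<gamma>3 n))
            \<and> weak_conv_halfline \<gamma>3 \<gamma>"
proof -
  have U01_AE: "AE u in U01. 0 \<le> u \<and> u \<le> 1"
    unfolding U01_def by (rule AE_uniform_measureI) auto
  have cc: "constr d \<gamma> U01" unfolding constr_def by (intro conjI assms U01_prob sets_U01 U01_AE)
  interpret c: constr d \<gamma> U01 by (rule cc)
  have "abs_cont_measure (c.mu n)" for n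
    unfolding abs_cont_measure_def absolutely_continuous_def
  proof
    fix N :: "real set" assume N: "N \<in> null_sets lborel"
    then have Nb[measurable]: "N \<in> sets borel" by (simp add: null_sets_def)
    have be: "c.be n \<noteq> 0" using c.al_be_pos[of n] by simp
    have m: "1 / c.mm n \<noteq> 0" using c.mm_pos[of n] by simp
    have "emeasure (c.mu n) N = 0"
    proof (rule c.mu_null[OF Nb])
      have "{u. c.al n + c.be n * u \<in> N} = (\<lambda>u. c.al n + c.be n * u) -` N" by auto
      then show "emeasure U01 {u. c.al n + c.be n * u \<in> N} = 0" using U01_affine_null[OF N be] by simp
      fix t :: real
      have "{u. c.qq n t + u / c.mm n \<in> N} = (\<lambda>u. c.qq n t + (1 / c.mm n) * u) -` N" by auto
      then show "emeasure U01 {u. c.qq n t + u / c.mm n \<in> N} = 0" using U01_affine_null[OF N m] by simp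
    qed
    then show "N \<in> null_sets (c.mu n)" using Nb by (simp add: null_sets_def c.sets_mu)
  qed
  then show ?thesis using c.mu_PW c.mu_weak by blast
qed

theorem theoremB2:
  fixes d :: nat and \<gamma> :: "real measure"
  assumes "d \<ge> 3" and "\<gamma> \<in> PW d"
  shows "(\<exists>\<gamma>1 :: nat \<Rightarrow> real measure. (\<forall>n. \<gamma>1 n \<in> PW d \<and> discrete_measure (\<gamma>1 n))
            \<and> weak_conv_halfline \<gamma>1 \<gamma>)
       \<and> (\<exists>\<gamma>2 :: nat \<Rightarrow> real measure. (\<forall>n. \<gamma>2 n \<in> PW d \<and> singular_measure (\<gamma>2 n) \<and> no_atoms (\<gamma>2 n))
            \<and> weak_conv_halfline \<gamma>2 \<gamma>)
       \<and> (\<exists>\<gamma>3 :: nat \<Rightarrow> real measure. (\<forall>n. \<gamma>3 n \<in> PW d \<and> abs_cont_measure (\<gamma>3 n))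
            \<and> weak_conv_halfline \<gamma>3 \<gamma>)"
  using exists_discrete[OF assms] exists_singular[OF assms] exists_ac[OF assms] by blast

end
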